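(* Let $\alpha=c+d\rho\in\mathbb{Z}[\rho]$ with $7\le N(\alpha)\equiv 1 \pmod 6$, and suppose $\alpha$ is not an associate of any (rational) integer. Let $\ell=\gcd(c,d)$, $c'=c/\ell$, $d'=d/\ell$ and $\alpha'=c'+d'\rho$. Then $EJ_\alpha$ is an $\ell^2$-fold cover of a 6-valent first-kind Frobenius circulant (with cyclic kernel) that is isomorphic to $EJ_{\alpha'}$.
   Context: $\rho=(1+\sqrt{-3})/2$, $\mathbb{Z}[\rho]=\{x+y\rho: x,y\in\mathbb{Z}\}$ with norm $N(x+y\rho)=x^2+xy+y^2$; $\alpha,\beta$ are associates if $\alpha=\beta\rho^j$ for some integer $j$. For $N(\gamma)\ge 7$, $EJ_\gamma$ is the Cayley graph on the additive group of $\mathbb{Z}[\rho]/(\gamma)$ with connection set $\{\pm[1]_\gamma,\pm[\rho]_\gamma,\pm[\rho^2]_\gamma\}$. A $k$-fold cover of $\Gamma_2$ by $\Gamma_1$ is a surjection $V(\Gamma_1)\to V(\Gamma_2)$ restricting to bijections between neighbourhoods, with all fibres of size $k$. For $n\ge 7$, $TL_n(a,b,c)$ is the Cayley graph on $\mathbb{Z}_n$ with connection set $\{\pm[a],\pm[b],\pm[c]\}$ (these six residues distinct). A Frobenius group is a transitive, non-regular permutation group in which only the identity fixes two points; a finite one is $K\rtimes H$ with regular normal kernel $K$ and point stabiliser $H$ acting on $K$ by conjugation. A first-kind $K\rtimes H$-Frobenius graph is $\mathrm{Cay}(K,s^H)$ with $\langle s^H\rangle=K$ and $|H|$ even or $s$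 an involution. A 6-valent first-kind Frobenius circulant with cyclic kernel is a 6-valent $TL_n(a,b,c)$ that is a first-kind $\mathbb{Z}_n\rtimes H$-Frobenius graph for some $H\le\mathbb{Z}_n^*$ with $\mathbb{Z}_n\rtimes H$ (acting by $[x]^{([y],[m])}=[(x+y)m]$) Frobenius with kernel $\mathbb{Z}_n$. *)

theory Defs
  imports Main
begin

section \<open>Eisenstein integers Z[rho], represented as pairs (x,y) meaning x + y*rho\<close>

type_synonym eis = "int \<times> int"

definition eis_add :: "eis \<Rightarrow> eis \<Rightarrow> eis" where
  "eis_add u v = (fst u + fst v, snd u + snd v)"

definition eis_sub :: "eis \<Rightarrow> eis \<Rightarrow> eis" where
  "eis_sub u v = (fst u - fst v, snd u - snd v)"

text \<open>rho^2 = rho - 1, so (x1 + y1 rho)(x2 + y2 rho) = (x1 x2 - y1 y2) + (x1 y2 + x2 y1 + y1 y2) rho\<close>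
definition eis_mult :: "eis \<Rightarrow> eis \<Rightarrow> eis" where
  "eis_mult u v = (fst u * fst v - snd u * snd v,
                   fst u * snd v + fst v * snd u + snd u * snd v)"

definition eis_norm :: "eis \<Rightarrow> int" where
  "eis_norm u = fst u ^ 2 + fst u * snd u + snd u ^ 2"

definition eis_rho :: eis where "eis_rho = (0, 1)"

fun eis_pow :: "eis \<Rightarrow> nat \<Rightarrow> eis" where
  "eis_pow u 0 = (1, 0)"
| "eis_pow u (Suc n) = eis_mult u (eis_pow u n)"

text \<open>alpha and beta are associates if alpha = beta * rho^j for some j (rho has order 6,
  so natural exponents cover all integer exponents).\<close>
definition eis_associate :: "eis \<Rightarrow> eis \<Rightarrow> bool" where
  "eis_associate a b \<longleftrightarrow> (\<exists>j::nat. a = eis_mult b (eis_pow eis_rho j))"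

type_synonym 'a graph = "'a set \<times> ('a \<Rightarrow> 'a \<Rightarrow> bool)"

definition verts :: "'a graph \<Rightarrow> 'a set" where "verts G = fst G"
definition adj :: "'a graph \<Rightarrow> 'a \<Rightarrow> 'a \<Rightarrow> bool" where "adj G = snd G"

definition nbhd :: "'a graph \<Rightarrow> 'a \<Rightarrow> 'a set" where
  "nbhd G v = {u \<in> verts G. adj G v u}"

definition graph_iso :: "'a graph \<Rightarrow> 'b graph \<Rightarrow> bool" where
  "graph_iso G H \<longleftrightarrow> (\<exists>f. bij_betw f (verts G) (verts H) \<and>
      (\<forall>x\<in>verts G. \<forall>y\<in>verts G. adj G x y \<longleftrightarrow> adj H (f x) (f y)))"

definition is_k_fold_cover :: "nat \<Rightarrow> 'a graph \<Rightarrow> 'b graph \<Rightarrow> bool" where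
  "is_k_fold_cover k G1 G2 \<longleftrightarrow> (\<exists>p. p ` verts G1 = verts G2 \<and>
      (\<forall>v\<in>verts G1. bij_betw p (nbhd G1 v) (nbhd G2 (p v))) \<and>
      (\<forall>w\<in>verts G2. card {v \<in> verts G1. p v = w} = k))"

definition eis_cong_rel :: "eis \<Rightarrow> (eis \<times> eis) set" where
  "eis_cong_rel g = {(u, v). \<exists>q. eis_sub u v = eis_mult q g}"

text \<open>connection set {+-1, +-rho, +-rho^2}, with rho^2 = -1 + rho\<close>
definition EJ_conn :: "eis set" where
  "EJ_conn = {(1,0), (-1,0), (0,1), (0,-1), (-1,1), (1,-1)}"

definition EJ :: "eis \<Rightarrow> eis set graph" where
  "EJ g = (UNIV // eis_cong_rel g,
           \<lambda>X Y. \<exists>x\<in>X. \<exists>y\<in>Y. eis_sub y x \<in> EJ_conn)"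

definition TL_conn :: "int \<Rightarrow> int \<Rightarrow> int \<Rightarrow> int \<Rightarrow> int set" where
  "TL_conn n a b c = {a mod n, (-a) mod n, b mod n, (-b) mod n, c mod n, (-c) mod n}"

definition TL :: "int \<Rightarrow> int \<Rightarrow> int \<Rightarrow> int \<Rightarrow> int graph" where
  "TL n a b c = ({0..<n}, \<lambda>x y. (y - x) mod n \<in> TL_conn n a b c)"

definition six_valent_TL :: "int \<Rightarrow> int \<Rightarrow> int \<Rightarrow> int \<Rightarrow> bool" where
  "six_valent_TL n a b c \<longleftrightarrow> n \<ge> 7 \<and> card (TL_conn n a b c) = 6"

definition unit_subgroup :: "int \<Rightarrow> int set \<Rightarrow> bool" where
  "unit_subgroup n H \<longleftrightarrow> H \<subseteq> {m \<in> {0..<n}. coprime m n} \<and> 1 mod n \<in> H \<and>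
      (\<forall>h\<in>H. \<forall>h'\<in>H. (h * h') mod n \<in> H) \<and>
      (\<forall>h\<in>H. \<exists>h'\<in>H. (h * h') mod n = 1 mod n)"

text \<open>The permutation group Z_n \<rtimes> H acting on Z_n by x \<mapsto> (x+y)m.\<close>
definition affine_group :: "int \<Rightarrow> int set \<Rightarrow> (int \<Rightarrow> int) set" where
  "affine_group n H = {(\<lambda>x. ((x + y) * m) mod n) | y m. y \<in> {0..<n} \<and> m \<in> H}"

definition is_frobenius_perm_group :: "int set \<Rightarrow> (int \<Rightarrow> int) set \<Rightarrow> bool" where
  "is_frobenius_perm_group X G \<longleftrightarrow>
     (\<forall>x\<in>X. \<forall>z\<in>X. \<exists>g\<in>G. g x = z) \<and>
     (\<exists>g\<in>G. (\<exists>x\<in>X. g x \<noteq> x) \<and> (\<exists>x\<in>X. g x = x)) \<and>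
     (\<forall>g\<in>G. \<forall>x\<in>X. \<forall>y\<in>X. x \<noteq> y \<and> g x = x \<and> g y = y \<longrightarrow> (\<forall>z\<in>X. g z = z))"

text \<open>Z_n \<rtimes> H is a Frobenius group with kernel Z_n (the translations): the Frobenius
  kernel (identity together with the fixed-point-free elements) is exactly the set of
  translations.\<close>
definition frobenius_with_cyclic_kernel :: "int \<Rightarrow> int set \<Rightarrow> bool" where
  "frobenius_with_cyclic_kernel n H \<longleftrightarrow>
     is_frobenius_perm_group {0..<n} (affine_group n H) \<and>
     (\<forall>g\<in>affine_group n H.
        ((\<forall>x\<in>{0..<n}. g x = x) \<or> (\<forall>x\<in>{0..<n}. g x \<noteq> x)) \<longleftrightarrow>
        (\<exists>y\<in>{0..<n}. \<forall>x\<in>{0..<n}. g x = (x + y) mod n))"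

inductive_set zn_span :: "int \<Rightarrow> int set \<Rightarrow> int set" for n T where
  zero: "0 \<in> zn_span n T"
| gen: "t \<in> T \<Longrightarrow> t \<in> zn_span n T"
| add: "u \<in> zn_span n T \<Longrightarrow> v \<in> zn_span n T \<Longrightarrow> (u + v) mod n \<in> zn_span n T"
| neg: "u \<in> zn_span n T \<Longrightarrow> (- u) mod n \<in> zn_span n T"

definition orbit_mult :: "int \<Rightarrow> int \<Rightarrow> int set \<Rightarrow> int set" where
  "orbit_mult n s H = {(s * h) mod n | h. h \<in> H}"

text \<open>TL_n(a,b,c) is a 6-valent first-kind Frobenius circulant with cyclic kernel:
  it equals Cay(Z_n, s^H) for some H \<le> Z_n^* with Z_n \<rtimes> H Frobenius with kernel Z_n,
  s^H generating Z_n, and |H| even or s an involution.\<close>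
definition first_kind_frobenius_circulant :: "int \<Rightarrow> int \<Rightarrow> int \<Rightarrow> int \<Rightarrow> bool" where
  "first_kind_frobenius_circulant n a b c \<longleftrightarrow> six_valent_TL n a b c \<and>
     (\<exists>H s. unit_subgroup n H \<and> frobenius_with_cyclic_kernel n H \<and>
        s \<in> {0..<n} \<and> TL_conn n a b c = orbit_mult n s H \<and>
        zn_span n (orbit_mult n s H) = {0..<n} \<and>
        (even (card H) \<or> (s \<noteq> 0 \<and> (2 * s) mod n = 0)))"

end

theory Submission
  imports Defs "HOL-Number_Theory.Cong"
begin


definition inI :: "eis \<Rightarrow> eis \<Rightarrow> bool" where
  "inI g u \<longleftrightarrow> (\<exists>q. u = eis_mult q g)"

lemma eis_mult_assoc: "eis_mult (eis_mult a b) c = eis_mult a (eis_mult b c)"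
  by (simp add: eis_mult_def algebra_simps)
lemma eis_mult_comm: "eis_mult a b = eis_mult b a"
  by (simp add: eis_mult_def algebra_simps)

lemma inI_add: "inI g u \<Longrightarrow> inI g v \<Longrightarrow> inI g (eis_add u v)"
proof -
  assume "inI g u" "inI g v"
  then obtain q1 q2 where "u = eis_mult q1 g" "v = eis_mult q2 g" by (auto simp: inI_def)
  then have "eis_add u v = eis_mult (eis_add q1 q2) g" by (simp add: eis_mult_def eis_add_def algebra_simps)
  then show ?thesis unfolding inI_def by blast
qed
lemma inI_sub: "inI g u \<Longrightarrow> inI g v \<Longrightarrow> inI g (eis_sub u v)"
proof -
  assume "inI g u" "inI g v"
  then obtain q1 q2 where "u = eis_mult q1 g" "v = eis_mult q2 g" by (auto simp: inI_def)
  then have "eis_sub u v = eis_mult (eis_sub q1 q2) g" by (simp add: eis_mult_def eis_sub_def algebra_simps)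
  then show ?thesis unfolding inI_def by blast
qed
lemma inI_mult: "inI g u \<Longrightarrow> inI g (eis_mult v u)"
proof -
  assume "inI g u"
  then obtain q where "u = eis_mult q g" by (auto simp: inI_def)
  then have "eis_mult v u = eis_mult (eis_mult v q) g" by (simp add: eis_mult_assoc)
  then show ?thesis unfolding inI_def by blast
qed
lemma inI_self: "inI g g"
  unfolding inI_def by (rule exI[of _ "(1,0)"]) (simp add: eis_mult_def)
lemma inI_zero: "inI g (0,0)"
  unfolding inI_def by (rule exI[of _ "(0,0)"]) (simp add: eis_mult_def)

lemma norm_mult: "eis_norm (eis_mult a b) = eis_norm a * eis_norm b"
  by (simp add: eis_norm_def eis_mult_def power2_eq_square algebra_simps)

lemma norm_pos: "u \<noteq> (0,0) \<Longrightarrow> eis_norm u \<ge> 1"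
proof -
  assume "u \<noteq> (0,0)"
  obtain x y where u: "u = (x,y)" by fastforce
  have "4 * eis_norm u = (2*x+y)^2 + 3*y^2" by (simp add: u eis_norm_def power2_eq_square algebra_simps)
  moreover have "(2*x+y)^2 + 3*y^2 > 0"
  proof (cases "y = 0")
    case True then have "x \<noteq> 0" using \<open>u \<noteq> (0,0)\<close> u by auto
    then show ?thesis using True by simp
  next
    case False then show ?thesis by (simp add: add_nonneg_pos)
  qed
  ultimately show ?thesis by linarith
qed

lemma norm_nonneg: "eis_norm u \<ge> 0"
  by (cases "u = (0,0)") (auto simp: eis_norm_def dest: norm_pos)

lemma inI_norm: "inI g u \<Longrightarrow> u \<noteq> (0,0) \<Longrightarrow> eis_norm u \<ge> eis_norm g"
proof -
  assume "inI g u" "u \<noteq> (0,0)"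
  then obtain q where q: "u = eis_mult q g" by (auto simp: inI_def)
  have "q \<noteq> (0,0)" using q \<open>u \<noteq> (0,0)\<close> by (auto simp: eis_mult_def)
  then have "eis_norm q \<ge> 1" by (rule norm_pos)
  then show ?thesis using q norm_mult[of q g] norm_nonneg[of g]
    by (simp add: mult_le_cancel_right1 mult_right_mono)
qed

lemma conn_diff: "a \<in> EJ_conn \<Longrightarrow> b \<in> EJ_conn \<Longrightarrow> a \<noteq> b \<Longrightarrow> eis_norm (eis_sub a b) \<le> 4 \<and> eis_sub a b \<noteq> (0,0)"
  by (auto simp: EJ_conn_def eis_sub_def eis_norm_def)

lemma conn_inj: "a \<in> EJ_conn \<Longrightarrow> b \<in> EJ_conn \<Longrightarrow> inI g (eis_sub a b) \<Longrightarrow> eis_norm g \<ge> 5 \<Longrightarrow> a = b"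
  using conn_diff inI_norm by fastforce



abbreviation cls :: "eis \<Rightarrow> eis \<Rightarrow> eis set" where
  "cls g a \<equiv> eis_cong_rel g `` {a}"

lemma R_iff: "(a,b) \<in> eis_cong_rel g \<longleftrightarrow> inI g (eis_sub a b)"
  by (simp add: eis_cong_rel_def inI_def)

lemma equiv_R: "equiv UNIV (eis_cong_rel g)"
proof (rule equivI)
  show "refl (eis_cong_rel g)"
  proof (rule reflI)
    fix a :: eis
    have "eis_sub a a = (0,0)" by (simp add: eis_sub_def)
    then show "(a,a) \<in> eis_cong_rel g" using inI_zero[of g] by (simp add: R_iff)
  qed
  show "sym (eis_cong_rel g)"
  proof (rule symI)
    fix a b assume "(a,b) \<in> eis_cong_rel g"
    then have "inI g (eis_sub a b)" by (simp add: eis_cong_rel_def inI_def)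
    then have "inI g (eis_sub (0,0) (eis_sub a b))" using inI_sub inI_zero by blast
    moreover have "eis_sub (0,0) (eis_sub a b) = eis_sub b a" by (simp add: eis_sub_def)
    ultimately show "(b,a) \<in> eis_cong_rel g" by (simp add: eis_cong_rel_def inI_def)
  qed
  show "trans (eis_cong_rel g)"
  proof (rule transI)
    fix a b c assume "(a,b) \<in> eis_cong_rel g" "(b,c) \<in> eis_cong_rel g"
    then have "inI g (eis_sub a b)" "inI g (eis_sub b c)" by (simp_all add: eis_cong_rel_def inI_def)
    then have "inI g (eis_add (eis_sub a b) (eis_sub b c))" using inI_add by blast
    moreover have "eis_add (eis_sub a b) (eis_sub b c) = eis_sub a c" by (simp add: eis_sub_def eis_add_def)
    ultimately show "(a,c) \<in> eis_cong_rel g" by (simp add: eis_cong_rel_def inI_def)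
  qed
qed simp

lemma cls_eq: "cls g a = cls g b \<longleftrightarrow> inI g (eis_sub a b)"
  using eq_equiv_class_iff[OF equiv_R, of a b g] R_iff by auto

lemma mem_cls: "x \<in> cls g a \<longleftrightarrow> inI g (eis_sub a x)"
  using R_iff by auto

lemma verts_EJ: "verts (EJ g) = range (cls g)"
  by (auto simp: verts_def EJ_def quotient_def)

lemma adj_EJ: "adj (EJ g) (cls g a) (cls g b) \<longleftrightarrow> (\<exists>c\<in>EJ_conn. inI g (eis_sub (eis_sub b a) c))"
proof
  assume "adj (EJ g) (cls g a) (cls g b)"
  then obtain x y where xy: "x \<in> cls g a" "y \<in> cls g b" "eis_sub y x \<in> EJ_conn"
    by (auto simp: adj_def EJ_def)
  then have "inI g (eis_sub a x)" "inI g (eis_sub b y)" by (simp_all add: R_iff)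
  then have "inI g (eis_sub (eis_sub b y) (eis_sub a x))" using inI_sub by blast
  moreover have "eis_sub (eis_sub b y) (eis_sub a x) = eis_sub (eis_sub b a) (eis_sub y x)"
    by (simp add: eis_sub_def)
  ultimately show "\<exists>c\<in>EJ_conn. inI g (eis_sub (eis_sub b a) c)" using xy(3) by auto
next
  assume "\<exists>c\<in>EJ_conn. inI g (eis_sub (eis_sub b a) c)"
  then obtain c where c: "c \<in> EJ_conn" "inI g (eis_sub (eis_sub b a) c)" by auto
  have "a \<in> cls g a" using mem_cls[of a g a] inI_zero[of g] by (simp add: eis_sub_def)
  moreover have "eis_add a c \<in> cls g b"
    using c(2) by (simp add: R_iff eis_sub_def eis_add_def algebra_simps)
  moreover have "eis_sub (eis_add a c) a = c" by (simp add: eis_sub_def eis_add_def)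
  ultimately show "adj (EJ g) (cls g a) (cls g b)" using c(1) unfolding adj_def EJ_def snd_conv by metis
qed

lemma nbhd_EJ: "nbhd (EJ g) (cls g a) = (\<lambda>c. cls g (eis_add a c)) ` EJ_conn"
proof -
  have "adj (EJ g) (cls g a) (cls g b) \<longleftrightarrow> (\<exists>c\<in>EJ_conn. cls g b = cls g (eis_add a c))" for b
    unfolding adj_EJ cls_eq by (simp add: eis_sub_def eis_add_def algebra_simps)
  then show ?thesis unfolding nbhd_def verts_EJ by blast
qed



definition phi :: "int \<Rightarrow> eis \<Rightarrow> int" where "phi r v = fst v + snd v * r"

locale EC =
  fixes p q n u r :: int
  assumes cop: "coprime p q"
    and n_def: "n = eis_norm (p,q)"
    and n7: "n \<ge> 7"
    and u: "[q * u = 1] (mod n)"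
    and r_def: "r = (-p*u) mod n"
begin

lemma L_n: "inI (p,q) (n,0)"
  unfolding inI_def
  by (rule exI[of _ "(p+q, -q)"]) (simp add: n_def eis_mult_def eis_norm_def power2_eq_square algebra_simps)

lemma L_int_if: "n dvd m \<Longrightarrow> inI (p,q) (m,0)"
proof -
  assume "n dvd m"
  then obtain k where "m = n * k" by auto
  then have "(m,0) = eis_mult (k,0) (n,0)" by (simp add: eis_mult_def)
  then show ?thesis using inI_mult[OF L_n, of "(k,0)"] by simp
qed

lemma L_int_only: "inI (p,q) (m,0) \<Longrightarrow> n dvd m"
proof -
  assume "inI (p,q) (m,0)"
  then obtain s t where st: "(m,0) = eis_mult (s,t) (p,q)" unfolding inI_def by auto
  then have e1: "m = s*p - t*q" and e2: "s*q + t*(p+q) = 0" by (simp_all add: eis_mult_def algebra_simps)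
  have cq: "coprime q (p+q)"
  proof (rule coprimeI)
    fix d assume d: "d dvd q" "d dvd p+q"
    then have "d dvd p" by (simp add: dvd_add_left_iff)
    then show "is_unit d" using cop d(1) coprime_common_divisor by blast
  qed
  have "t*(p+q) = q*(-s)" using e2 by (simp add: algebra_simps)
  then have "q dvd t*(p+q)" by (metis dvd_triv_left)
  then have "q dvd t" using cq by (simp add: coprime_dvd_mult_left_iff)
  then obtain k where t: "t = q*k" by auto
  show "n dvd m"
  proof (cases "q = 0")
    case True
    then have "is_unit p" using cop by simp
    then have "\<bar>p\<bar> = 1" by simp
    then have "p^2 = 1" using power2_abs[of p] by simp
    then have "n = 1" using True by (simp add: n_def eis_norm_def)
    then show ?thesis by simp
  next
    case False
    have "q * (s + k*(p+q)) = 0" using e2 t by (simp add: algebra_simps)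
    then have s: "s = - k*(p+q)" using False by simp
    have "m = (- k*(p+q))*p - (q*k)*q" using e1 t s by simp
    also have "\<dots> = n * (-k)" by (simp add: n_def eis_norm_def power2_eq_square algebra_simps)
    finally show ?thesis by simp
  qed
qed

lemma L_int: "inI (p,q) (m,0) \<longleftrightarrow> n dvd m"
  using L_int_if L_int_only by blast

lemma L_rho: "inI (p,q) (-r,1)"
proof -
  have "[p + q*r = p + q*(-p*u)] (mod n)" unfolding r_def
    by (intro cong_add cong_mult) (simp_all add: cong_def)
  moreover have "[p + q*(-p*u) = p - p * (q*u)] (mod n)" by (simp add: algebra_simps)
  moreover have "[p - p * (q*u) = p - p*1] (mod n)" by (intro cong_diff cong_mult u) simp_all
  ultimately have "[p + q*r = 0] (mod n)" by (metis cong_trans diff_self mult_1_right)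
  then have "n dvd p + q*r" by (simp add: cong_0_iff)
  then have i1: "inI (p,q) (p + q*r, 0)" by (rule L_int_if)
  have iA: "inI (p,q) (-q*r, q)"
    using inI_sub[OF inI_self i1] by (simp add: eis_sub_def)
  have "n dvd q*u - 1" using u by (simp add: cong_iff_dvd_diff)
  then have i2: "inI (p,q) (q*u - 1, 0)" by (rule L_int_if)
  have "(-r, 1) = eis_sub (eis_mult (u,0) (-q*r,q)) (eis_mult (-r,1) (q*u-1,0))"
    by (simp add: eis_sub_def eis_mult_def algebra_simps)
  then show ?thesis using inI_sub[OF inI_mult[OF iA] inI_mult[OF i2]] by metis
qed

lemma L_phi: "inI (p,q) (eis_sub v (phi r v, 0))"
proof -
  have "eis_sub v (phi r v, 0) = eis_mult (snd v, 0) (-r,1)"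
    by (simp add: eis_sub_def phi_def eis_mult_def)
  then show ?thesis using inI_mult[OF L_rho] by metis
qed

lemma L_ker: "inI (p,q) v \<longleftrightarrow> n dvd phi r v"
proof
  assume "inI (p,q) v"
  then have "inI (p,q) (eis_sub v (eis_sub v (phi r v, 0)))" using inI_sub L_phi by blast
  then show "n dvd phi r v" by (simp add: eis_sub_def L_int)
next
  assume "n dvd phi r v"
  then have "inI (p,q) (phi r v, 0)" by (rule L_int_if)
  then have "inI (p,q) (eis_add (eis_sub v (phi r v, 0)) (phi r v, 0))" using inI_add L_phi by blast
  then show "inI (p,q) v" by (simp add: eis_sub_def eis_add_def)
qed

lemma r2: "n dvd r^2 - r + 1"
proof -
  have "(r^2 - r + 1, 0) = eis_mult (1 - r, -1) (-r, 1)"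
    by (simp add: eis_mult_def power2_eq_square algebra_simps)
  then have "inI (p,q) (r^2 - r + 1, 0)" using inI_mult[OF L_rho] by metis
  then show ?thesis by (simp add: L_int)
qed

lemma phi_sub: "phi r (eis_sub a b) = phi r a - phi r b"
  by (simp add: phi_def eis_sub_def algebra_simps)
lemma phi_add: "phi r (eis_add a b) = phi r a + phi r b"
  by (simp add: phi_def eis_add_def algebra_simps)

lemma npos: "n > 0" using n7 by simp

lemma r_range: "0 \<le> r \<and> r < n" using npos r_def by simp

end


lemma verts_TL: "verts (TL n a b c) = {0..<n}" by (simp add: verts_def TL_def)
lemma adj_TL: "adj (TL n a b c) x y \<longleftrightarrow> (y - x) mod n \<in> TL_conn n a b c" by (simp add: adj_def TL_def)

lemma card_conn: "card EJ_conn = 6"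
  by (simp add: EJ_conn_def)

context EC begin

lemma phi_cong_inj: "c1 \<in> EJ_conn \<Longrightarrow> c2 \<in> EJ_conn \<Longrightarrow> phi r c1 mod n = phi r c2 mod n \<Longrightarrow> c1 = c2"
proof -
  assume c: "c1 \<in> EJ_conn" "c2 \<in> EJ_conn" "phi r c1 mod n = phi r c2 mod n"
  then have "n dvd phi r (eis_sub c1 c2)" by (simp add: phi_sub mod_eq_dvd_iff)
  then have "inI (p,q) (eis_sub c1 c2)" by (simp add: L_ker)
  moreover have "eis_norm (p,q) \<ge> 5" using n7 n_def by simp
  ultimately show ?thesis using conn_inj c by blast
qed

lemma TLc_img: "TL_conn n 1 r (r-1) = (\<lambda>c. phi r c mod n) ` EJ_conn"
  by (auto simp: TL_conn_def EJ_conn_def phi_def)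

lemma card_TLc: "card (TL_conn n 1 r (r-1)) = 6"
proof -
  have "inj_on (\<lambda>c. phi r c mod n) EJ_conn" using phi_cong_inj by (auto simp: inj_on_def)
  then show ?thesis by (simp add: TLc_img card_image card_conn)
qed

lemma in_TLc: "z mod n \<in> TL_conn n 1 r (r-1) \<longleftrightarrow> (\<exists>c\<in>EJ_conn. n dvd z - phi r c)"
proof -
  have "z mod n \<in> TL_conn n 1 r (r-1) \<longleftrightarrow> (\<exists>c\<in>EJ_conn. z mod n = phi r c mod n)"
    by (auto simp: TLc_img)
  also have "\<dots> \<longleftrightarrow> (\<exists>c\<in>EJ_conn. n dvd z - phi r c)" by (simp add: mod_eq_dvd_iff)
  finally show ?thesis .
qed

lemma iso: "graph_iso (TL n 1 r (r-1)) (EJ (p,q))"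
proof -
  let ?f = "\<lambda>x. cls (p,q) (x,0)"
  have inj: "inj_on ?f {0..<n}"
  proof (rule inj_onI)
    fix x y assume xy: "x \<in> {0..<n}" "y \<in> {0..<n}" "?f x = ?f y"
    then have "inI (p,q) (eis_sub (x,0) (y,0))" by (simp add: cls_eq)
    then have "n dvd x - y" by (simp add: eis_sub_def L_int)
    then have "x mod n = y mod n" by (simp add: mod_eq_dvd_iff)
    then show "x = y" using xy by simp
  qed
  have surj: "?f ` {0..<n} = range (cls (p,q))"
  proof
    show "?f ` {0..<n} \<subseteq> range (cls (p,q))" by auto
    show "range (cls (p,q)) \<subseteq> ?f ` {0..<n}"
    proof
      fix X assume "X \<in> range (cls (p,q))"
      then obtain v where v: "X = cls (p,q) v" by auto
      have "n dvd phi r (eis_sub v (phi r v mod n, 0))"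
        by (simp add: phi_sub phi_def[of r "(_,0)"] mod_eq_dvd_iff[symmetric])
      then have "X = ?f (phi r v mod n)" using v by (simp add: cls_eq L_ker)
      moreover have "phi r v mod n \<in> {0..<n}" using npos by simp
      ultimately show "X \<in> ?f ` {0..<n}" by blast
    qed
  qed
  have adjc: "adj (TL n 1 r (r-1)) x y \<longleftrightarrow> adj (EJ (p,q)) (?f x) (?f y)" for x y
  proof -
    have "adj (TL n 1 r (r-1)) x y \<longleftrightarrow> (\<exists>c\<in>EJ_conn. n dvd (y - x) - phi r c)"
      by (simp add: adj_def TL_def in_TLc)
    also have "\<dots> \<longleftrightarrow> (\<exists>c\<in>EJ_conn. inI (p,q) (eis_sub (eis_sub (y,0) (x,0)) c))"
      by (simp add: L_ker phi_def eis_sub_def algebra_simps)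
    also have "\<dots> \<longleftrightarrow> adj (EJ (p,q)) (?f x) (?f y)" by (simp add: adj_EJ)
    finally show ?thesis .
  qed
  show ?thesis unfolding graph_iso_def
    apply (rule exI[of _ ?f])
    using inj surj adjc by (simp add: bij_betw_def verts_EJ verts_TL)
qed

end


locale EC2 = EC +
  assumes n6: "n mod 6 = 1"
begin

abbreviation "HH \<equiv> TL_conn n 1 r (r-1)"

lemma modeq: "n dvd a - b \<Longrightarrow> a mod n = b mod n" by (simp add: mod_eq_dvd_iff)

lemma d3: "n dvd r^3 + 1"
proof -
  have "r^3 + 1 = (r^2 - r + 1) * (r + 1)" by (simp add: power2_eq_square power3_eq_cube algebra_simps)
  then show ?thesis using r2 by simp
qed

lemma pw0: "r^0 mod n = 1 mod n" by simp
lemma pw1: "r^1 mod n = r mod n" by simp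
lemma pw2: "r^2 mod n = (r-1) mod n" using r2 by (intro modeq) (simp add: algebra_simps)
lemma pw3: "r^3 mod n = (-1) mod n" using d3 by (intro modeq) simp
lemma pw4: "r^4 mod n = (-r) mod n"
proof (intro modeq)
  have "r^4 - (-r) = r * (r^3 + 1)" by (simp add: power2_eq_square power3_eq_cube power4_eq_xxxx algebra_simps)
  then show "n dvd r^4 - (-r)" using d3 by simp
qed
lemma pw5: "r^5 mod n = (-(r-1)) mod n"
proof (intro modeq)
  have "r^5 - (-(r-1)) = (r^2 - r + 1) * (r^3 + r^2 - 1)"
    by (simp add: power2_eq_square power3_eq_cube algebra_simps eval_nat_numeral)
  then show "n dvd r^5 - (-(r-1))" using r2 by simp
qed
lemma pw6: "r^6 mod n = 1 mod n"
proof (intro modeq)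
  have "r^6 - 1 = (r^3 + 1) * (r^3 - 1)"
    by (simp add: power2_eq_square power3_eq_cube algebra_simps eval_nat_numeral)
  then show "n dvd r^6 - 1" using d3 by simp
qed

lemma HH_pw: "HH = (\<lambda>k. r^k mod n) ` {0..<6}"
proof -
  have "{0..<6::nat} = {0,1,2,3,4,5}" by auto
  then have "(\<lambda>k. r^k mod n) ` {0..<6} = {r^0 mod n, r^1 mod n, r^2 mod n, r^3 mod n, r^4 mod n, r^5 mod n}"
    by simp
  also have "\<dots> = HH" unfolding pw0 pw1 pw2 pw3 pw4 pw5 TL_conn_def by blast
  finally show ?thesis by simp
qed

lemma pw6k: "(r^6)^m mod n = 1"
proof -
  have "(r^6)^m mod n = ((r^6) mod n)^m mod n" by (simp add: power_mod)
  also have "\<dots> = 1" using pw6 n7 by simp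
  finally show ?thesis .
qed

lemma pw_red: "r^k mod n = r^(k mod 6) mod n"
proof -
  have "k = 6*(k div 6) + k mod 6" by simp
  then have eq: "r^k = (r^6)^(k div 6) * r^(k mod 6)" by (metis power_add power_mult)
  have "r^k mod n = (((r^6)^(k div 6) mod n) * r^(k mod 6)) mod n"
    unfolding eq by (simp add: mod_mult_left_eq)
  then show ?thesis using pw6k by simp
qed

lemma pw_in: "r^k mod n \<in> HH"
proof -
  have "k mod 6 \<in> {0..<6}" by simp
  then show ?thesis unfolding HH_pw pw_red[of k] by blast
qed

lemma HH_ex: "h \<in> HH \<Longrightarrow> \<exists>k. h = r^k mod n"
  unfolding HH_pw by blast

lemma cop_r: "coprime r n"
proof -
  have "[r * (1 - r) = 1] (mod n)"
  proof -
    have "1 - r*(1-r) = r^2 - r + 1" by (simp add: power2_eq_square algebra_simps)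
    then have "n dvd 1 - r*(1-r)" using r2 by metis
    then show ?thesis using cong_sym cong_iff_dvd_diff by blast
  qed
  then show ?thesis using coprime_iff_invertible_int by blast
qed

lemma cop_pw: "coprime (r^k mod n) n"
  using cop_r npos by (simp add: coprime_mod_left_iff)

lemma unit_sub: "unit_subgroup n HH"
  unfolding unit_subgroup_def
proof (intro conjI ballI)
  show "HH \<subseteq> {m \<in> {0..<n}. coprime m n}"
  proof
    fix x assume "x \<in> HH"
    then obtain k where "x = r^k mod n" using HH_ex by blast
    then show "x \<in> {m \<in> {0..<n}. coprime m n}" using npos cop_pw by simp
  qed
  show "1 mod n \<in> HH" by (simp add: TL_conn_def)
  fix h assume h: "h \<in> HH"
  then obtain i where i: "h = r^i mod n" using HH_ex by blast
  {
    fix h' assume "h' \<in> HH"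
    then obtain j where j: "h' = r^j mod n" using HH_ex by blast
    have "(h*h') mod n = r^(i+j) mod n" using i j by (simp add: power_add mod_mult_eq)
    then show "(h*h') mod n \<in> HH" using pw_in by simp
  }
  have "(h * (r^(5*i) mod n)) mod n = r^(6*i) mod n"
    using i by (simp add: mod_mult_eq flip: power_add)
  also have "\<dots> = ((r^6) mod n)^i mod n" by (simp add: power_mult power_mod)
  also have "\<dots> = 1 mod n" using pw6 by (simp add: power_mod)
  finally show "\<exists>h'\<in>HH. (h * h') mod n = 1 mod n" using pw_in by blast
qed

end


context EC2 begin

lemma cop2: "coprime 2 n"
proof -
  have "[n * 1 = 1] (mod 2)" using n6 by (simp add: cong_def) presburger
  then have "coprime n 2" using coprime_iff_invertible_int by blast
  then show ?thesis by (simp add: coprime_commute)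
qed

lemma cop3: "coprime 3 n"
proof -
  have "[n * 1 = 1] (mod 3)" using n6 by (simp add: cong_def) presburger
  then have "coprime n 3" using coprime_iff_invertible_int by blast
  then show ?thesis by (simp add: coprime_commute)
qed

lemma cop_rm1: "coprime (r - 1) n"
proof -
  have "1 - (r-1)*(-r) = r^2 - r + 1" by (simp add: power2_eq_square algebra_simps)
  then have "n dvd 1 - (r-1)*(-r)" using r2 by metis
  then have "[(r-1)*(-r) = 1] (mod n)" using cong_sym cong_iff_dvd_diff by blast
  then show ?thesis using coprime_iff_invertible_int by blast
qed

lemma cop_rp1: "coprime (r + 1) n"
proof -
  have "(r+1)^2 - 3*r = r^2 - r + 1" by (simp add: power2_eq_square algebra_simps)
  then have "n dvd (r+1)^2 - 3*r" using r2 by metis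
  then have c: "[3*r = (r+1)^2] (mod n)" using cong_sym cong_iff_dvd_diff by blast
  have "coprime (3*r) n" using cop3 cop_r by simp
  then have "coprime ((r+1)^2) n" using cong_imp_coprime[OF c] by blast
  then show ?thesis by simp
qed

lemma cop_rm2: "coprime (r - 2) n"
proof -
  have "(r-1)*(r+1) - (r-2) = r^2 - r + 1" by (simp add: power2_eq_square algebra_simps)
  then have "n dvd (r-1)*(r+1) - (r-2)" using r2 by metis
  then have c: "[(r-1)*(r+1) = r - 2] (mod n)" using cong_iff_dvd_diff by blast
  have "coprime ((r-1)*(r+1)) n" using cop_rm1 cop_rp1 by simp
  then show ?thesis using cong_imp_coprime[OF c] by blast
qed

lemma cop_helper: "coprime (t - 1) n \<Longrightarrow> coprime (t mod n - 1) n"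
proof -
  assume "coprime (t - 1) n"
  moreover have "[t - 1 = t mod n - 1] (mod n)" by (simp add: cong_def mod_diff_left_eq)
  ultimately show ?thesis using cong_imp_coprime by blast
qed

lemma one_HH: "1 \<in> HH" using n7 by (simp add: TL_conn_def)

lemma cop_m1: "m \<in> HH \<Longrightarrow> m \<noteq> 1 \<Longrightarrow> coprime (m - 1) n"
proof -
  assume m: "m \<in> HH" "m \<noteq> 1"
  have c1: "coprime (-1 - 1) n" using cop2 by simp
  have c2: "coprime (r - 1) n" by (rule cop_rm1)
  have c3: "coprime (-r - 1) n" using cop_rp1
    by (metis coprime_minus_left_iff minus_diff_eq diff_minus_eq_add add.commute uminus_add_conv_diff)
  have c4: "coprime (r - 1 - 1) n" using cop_rm2 by simp
  have c5: "coprime (-(r-1) - 1) n" using cop_r by simp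
  have "m = 1 mod n \<or> m = (-1) mod n \<or> m = r mod n \<or> m = (-r) mod n \<or> m = (r-1) mod n \<or> m = (-(r-1)) mod n"
    using m(1) by (simp add: TL_conn_def)
  then show ?thesis
  proof (elim disjE)
    assume "m = 1 mod n" then show ?thesis using m(2) n7 by simp
  qed (use cop_helper[OF c1] cop_helper[OF c2] cop_helper[OF c3] cop_helper[OF c4] cop_helper[OF c5] in simp_all)
qed

lemma HH_range: "m \<in> HH \<Longrightarrow> 0 \<le> m \<and> m < n"
  using npos by (auto simp: TL_conn_def)

lemma r_ne1: "r \<noteq> 1"
proof
  assume "r = 1"
  then have "n dvd 1" using r2 by simp
  then show False using n7 by (simp add: zdvd_imp_le)
qed

lemma r_HH: "r \<in> HH" using r_range by (simp add: TL_conn_def)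

lemma nonfix: "m \<in> HH \<Longrightarrow> m \<noteq> 1 \<Longrightarrow> x1 \<in> {0..<n} \<Longrightarrow> x2 \<in> {0..<n} \<Longrightarrow>
   ((x1+y)*m) mod n = x1 \<Longrightarrow> ((x2+y)*m) mod n = x2 \<Longrightarrow> x1 = x2"
proof -
  assume a: "m \<in> HH" "m \<noteq> 1" "x1 \<in> {0..<n}" "x2 \<in> {0..<n}"
     "((x1+y)*m) mod n = x1" "((x2+y)*m) mod n = x2"
  have "((x1+y)*m) mod n = x1 mod n" "((x2+y)*m) mod n = x2 mod n" using a by simp_all
  then have "n dvd (x1+y)*m - x1" "n dvd (x2+y)*m - x2" by (simp_all add: mod_eq_dvd_iff)
  then have "n dvd ((x1+y)*m - x1) - ((x2+y)*m - x2)" by (rule dvd_diff)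
  moreover have "((x1+y)*m - x1) - ((x2+y)*m - x2) = (m - 1) * (x1 - x2)" by (simp add: algebra_simps)
  ultimately have "n dvd (m-1) * (x1 - x2)" by simp
  moreover have "coprime n (m - 1)" using cop_m1 a by (simp add: coprime_commute)
  ultimately have "n dvd x1 - x2" by (simp add: coprime_dvd_mult_right_iff)
  then have "x1 mod n = x2 mod n" by (simp add: mod_eq_dvd_iff)
  then show ?thesis using a by simp
qed

lemma hasfix: "m \<in> HH \<Longrightarrow> m \<noteq> 1 \<Longrightarrow> \<exists>x\<in>{0..<n}. ((x+y)*m) mod n = x"
proof -
  assume a: "m \<in> HH" "m \<noteq> 1"
  then have "coprime (m-1) n" by (rule cop_m1)
  then obtain v where v: "[(m-1) * v = 1] (mod n)" using coprime_iff_invertible_int by blast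
  define x where "x = (-(y*m)*v) mod n"
  have A: "[(x+y)*m = (-(y*m)*v + y)*m] (mod n)" unfolding x_def
    by (intro cong_mult cong_add) (simp_all add: cong_def)
  have B: "(-(y*m)*v + y)*m = (-(y*m)*v) + (y*m) * (1 - (m-1)*v)"
    by (simp add: algebra_simps)
  have v': "[1 - (m-1)*v = 0] (mod n)" using v
    by (simp add: cong_iff_dvd_diff dvd_diff_commute)
  have C: "[(-(y*m)*v) + (y*m) * (1 - (m-1)*v) = (-(y*m)*v) + (y*m) * 0] (mod n)"
    using v' by (intro cong_add cong_mult) simp_all
  have "[(x+y)*m = (-(y*m)*v) + (y*m) * 0] (mod n)"
    using cong_trans[OF A[unfolded B] C] .
  then have "[(x+y)*m = -(y*m)*v] (mod n)" by simp
  then have "((x+y)*m) mod n = x" unfolding x_def by (simp add: cong_def)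
  moreover have "x \<in> {0..<n}" using npos by (simp add: x_def)
  ultimately show ?thesis by blast
qed

end


context EC2 begin

lemma m_eq1: "m \<in> HH \<Longrightarrow> n dvd m - 1 \<Longrightarrow> m = 1"
proof -
  assume a: "m \<in> HH" "n dvd m - 1"
  then have "m mod n = 1 mod n" by (simp add: mod_eq_dvd_iff)
  then show ?thesis using HH_range[OF a(1)] n7 by simp
qed

lemma fix_dvd: "((x+y)*m) mod n = x \<Longrightarrow> n dvd (x+y)*m - x"
proof -
  assume h: "((x+y)*m) mod n = x"
  have "x mod n = x" by (metis h mod_mod_trivial)
  then have "((x+y)*m) mod n = x mod n" using h by simp
  then show ?thesis by (simp add: mod_eq_dvd_iff)
qed

lemma y_zero: "y \<in> {0..<n} \<Longrightarrow> n dvd y \<Longrightarrow> y = 0"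
proof -
  assume "y \<in> {0..<n}" "n dvd y"
  then show ?thesis by (metis atLeastLessThan_iff dvd_imp_mod_0 mod_pos_pos_trivial order_le_less)
qed

lemma aff_mem: "y \<in> {0..<n} \<Longrightarrow> m \<in> HH \<Longrightarrow> (\<lambda>x. ((x+y)*m) mod n) \<in> affine_group n HH"
  unfolding affine_group_def by blast

lemma frob_part1: "\<forall>x\<in>{0..<n}. \<forall>z\<in>{0..<n}. \<exists>g\<in>affine_group n HH. g x = z"
proof (intro ballI)
  fix x z assume xz: "x \<in> {0..<n}" "z \<in> {0..<n}"
  let ?g = "\<lambda>x'. ((x' + (z-x) mod n) * 1) mod n"
  have "?g \<in> affine_group n HH" using aff_mem[of "(z-x) mod n" 1] one_HH npos by simp
  moreover have "?g x = z" using xz by (simp add: mod_add_right_eq)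
  ultimately show "\<exists>g\<in>affine_group n HH. g x = z" by (intro bexI[where x="?g"]) auto
qed

lemma frob_part2: "\<exists>g\<in>affine_group n HH. (\<exists>x\<in>{0..<n}. g x \<noteq> x) \<and> (\<exists>x\<in>{0..<n}. g x = x)"
proof -
  let ?g = "\<lambda>x. ((x + 0) * r) mod n"
  have mem: "?g \<in> affine_group n HH" using aff_mem[of 0 r] r_HH npos by simp
  have A: "\<exists>x\<in>{0..<n}. ?g x \<noteq> x" using r_range r_ne1 n7 by (intro bexI[of _ 1]) auto
  have B: "\<exists>x\<in>{0..<n}. ?g x = x" using n7 by (intro bexI[of _ 0]) auto
  show ?thesis
  proof (rule bexI[where x="?g"])
    show "(\<exists>x\<in>{0..<n}. ?g x \<noteq> x) \<and> (\<exists>x\<in>{0..<n}. ?g x = x)" using A B by blast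
    show "?g \<in> affine_group n HH" by (rule mem)
  qed
qed

lemma frob_part3: "\<forall>g\<in>affine_group n HH. \<forall>x\<in>{0..<n}. \<forall>y\<in>{0..<n}.
   x \<noteq> y \<and> g x = x \<and> g y = y \<longrightarrow> (\<forall>z\<in>{0..<n}. g z = z)"
proof (intro ballI impI)
  fix g x1 x2 z assume g: "g \<in> affine_group n HH" and x: "x1 \<in> {0..<n}" "x2 \<in> {0..<n}"
    and h: "x1 \<noteq> x2 \<and> g x1 = x1 \<and> g x2 = x2" and z: "z \<in> {0..<n}"
  from g obtain y m where ym: "g = (\<lambda>x. ((x+y)*m) mod n)" "y \<in> {0..<n}" "m \<in> HH"
    unfolding affine_group_def by blast
  show "g z = z"
  proof (cases "m = 1")
    case True
    have "n dvd (x1+y)*m - x1" using h ym by (intro fix_dvd) simp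
    then have "n dvd y" using True by simp
    then have "y = 0" using ym(2) y_zero by blast
    then show ?thesis using ym True z by simp
  next
    case False
    then have "x1 = x2" using nonfix[OF ym(3) False x, where y=y] h ym by simp
    then show ?thesis using h by simp
  qed
qed

lemma frob_part4: "\<forall>g\<in>affine_group n HH.
        ((\<forall>x\<in>{0..<n}. g x = x) \<or> (\<forall>x\<in>{0..<n}. g x \<noteq> x)) \<longleftrightarrow>
        (\<exists>y\<in>{0..<n}. \<forall>x\<in>{0..<n}. g x = (x + y) mod n)"
proof (intro ballI)
  fix g assume g: "g \<in> affine_group n HH"
  from g obtain y m where ym: "g = (\<lambda>x. ((x+y)*m) mod n)" "y \<in> {0..<n}" "m \<in> HH"
    unfolding affine_group_def by blast
  have z1: "(0::int) \<in> {0..<n}" "(1::int) \<in> {0..<n}" using n7 by auto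
  show "((\<forall>x\<in>{0..<n}. g x = x) \<or> (\<forall>x\<in>{0..<n}. g x \<noteq> x)) \<longleftrightarrow>
        (\<exists>y\<in>{0..<n}. \<forall>x\<in>{0..<n}. g x = (x + y) mod n)"
  proof (cases "m = 1")
    case True
    have R: "\<exists>y\<in>{0..<n}. \<forall>x\<in>{0..<n}. g x = (x + y) mod n" using ym True by auto
    have L: "(\<forall>x\<in>{0..<n}. g x = x) \<or> (\<forall>x\<in>{0..<n}. g x \<noteq> x)"
    proof (cases "y = 0")
      case True then show ?thesis using ym \<open>m = 1\<close> by simp
    next
      case False
      have "g x \<noteq> x" if "x \<in> {0..<n}" for x
      proof
        assume "g x = x"
        then have "n dvd (x+y)*m - x" using ym by (intro fix_dvd) simp
        then have "n dvd y" using \<open>m = 1\<close> by simp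
        then show False using y_zero ym(2) False by blast
      qed
      then show ?thesis by blast
    qed
    show ?thesis using L R by blast
  next
    case False
    obtain x0 where x0: "x0 \<in> {0..<n}" "((x0+y)*m) mod n = x0" using hasfix[OF ym(3) False] by blast
    have nL: "\<not> (\<forall>x\<in>{0..<n}. g x = x)"
    proof
      assume a: "\<forall>x\<in>{0..<n}. g x = x"
      then have "g 0 = 0" "g 1 = 1" using z1 by auto
      then have e0: "((0+y)*m) mod n = 0" and e1: "((1+y)*m) mod n = 1" using ym by auto
      have "n dvd (0+y)*m - 0" by (rule fix_dvd[OF e0])
      moreover have "n dvd (1+y)*m - 1" by (rule fix_dvd[OF e1])
      ultimately
      have "n dvd ((1+y)*m - 1) - ((0+y)*m - 0)" by (rule dvd_diff[rotated])
      then have "n dvd m - 1" by (simp add: algebra_simps)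
      then show False using m_eq1 ym(3) False by blast
    qed
    have nL2: "\<not> (\<forall>x\<in>{0..<n}. g x \<noteq> x)" using x0 ym by auto
    have nR: "\<not> (\<exists>y\<in>{0..<n}. \<forall>x\<in>{0..<n}. g x = (x + y) mod n)"
    proof
      assume "\<exists>y\<in>{0..<n}. \<forall>x\<in>{0..<n}. g x = (x + y) mod n"
      then obtain y' where y': "\<forall>x\<in>{0..<n}. g x = (x + y') mod n" by blast
      have "g 0 = (0 + y') mod n" "g 1 = (1 + y') mod n"
        using bspec[OF y' z1(1)] bspec[OF y' z1(2)] by simp_all
      then have "((0+y)*m) mod n = (0 + y') mod n" "((1+y)*m) mod n = (1 + y') mod n"
        using ym(1) by simp_all
      then have "n dvd (0+y)*m - (0+y')" "n dvd (1+y)*m - (1+y')" by (simp_all add: mod_eq_dvd_iff)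
      then have "n dvd ((1+y)*m - (1+y')) - ((0+y)*m - (0+y'))" by (rule dvd_diff[rotated])
      then have "n dvd m - 1" by (simp add: algebra_simps)
      then show False using m_eq1 ym(3) False by blast
    qed
    show ?thesis using nL nL2 nR by blast
  qed
qed

lemma frob: "frobenius_with_cyclic_kernel n HH"
  unfolding frobenius_with_cyclic_kernel_def is_frobenius_perm_group_def
  using frob_part1 frob_part2 frob_part3 frob_part4 by blast

lemma span_sub: "w \<in> zn_span n T \<Longrightarrow> T \<subseteq> {0..<n} \<Longrightarrow> w \<in> {0..<n}"
  by (induction rule: zn_span.induct) (use npos in auto)

lemma span_all: "zn_span n HH = {0..<n}"
proof
  have hs: "HH \<subseteq> {0..<n}" using HH_range by auto
  show "zn_span n HH \<subseteq> {0..<n}"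
  proof
    fix w assume "w \<in> zn_span n HH"
    from span_sub[OF this hs] show "w \<in> {0..<n}" .
  qed
  have "int k < n \<longrightarrow> int k \<in> zn_span n HH" for k
  proof (induction k)
    case 0 then show ?case by (simp add: zn_span.zero)
  next
    case (Suc k)
    show ?case
    proof
      assume "int (Suc k) < n"
      then have "int k \<in> zn_span n HH" using Suc by simp
      then have "(int k + 1) mod n \<in> zn_span n HH" using zn_span.add zn_span.gen[OF one_HH] by blast
      then show "int (Suc k) \<in> zn_span n HH" using \<open>int (Suc k) < n\<close> by (simp add: add.commute)
    qed
  qed
  then show "{0..<n} \<subseteq> zn_span n HH"
    by (auto simp: atLeastLessThan_iff) (metis nonneg_int_cases)
qed

lemma orbit_HH: "orbit_mult n 1 HH = HH"
proof -
  have "orbit_mult n 1 HH = (\<lambda>h. h mod n) ` HH" unfolding orbit_mult_def by auto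
  also have "\<dots> = HH" using HH_range by (auto simp: image_iff)
  finally show ?thesis .
qed

lemma first_kind: "first_kind_frobenius_circulant n 1 r (r-1)"
  unfolding first_kind_frobenius_circulant_def six_valent_TL_def
proof (intro conjI exI[of _ HH] exI[of _ 1])
  show "7 \<le> n" by (rule n7)
  show "card HH = 6" by (rule card_TLc)
  show "unit_subgroup n HH" by (rule unit_sub)
  show "frobenius_with_cyclic_kernel n HH" by (rule frob)
  show "(1::int) \<in> {0..<n}" using n7 by simp
  show "HH = orbit_mult n 1 HH" using orbit_HH by simp
  show "zn_span n (orbit_mult n 1 HH) = {0..<n}" using orbit_HH span_all by simp
  show "even (card HH) \<or> 1 \<noteq> 0 \<and> 2 * 1 mod n = 0" using card_TLc by simp
qed

end


lemma mult_cancel: "eis_mult x g = eis_mult y g \<Longrightarrow> g \<noteq> (0,0) \<Longrightarrow> x = y"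
proof (rule ccontr)
  assume a: "eis_mult x g = eis_mult y g" "g \<noteq> (0,0)" "x \<noteq> y"
  have "eis_mult (eis_sub x y) g = (0,0)" using a(1)
    by (simp add: eis_mult_def eis_sub_def algebra_simps)
  then have "eis_norm (eis_sub x y) * eis_norm g = 0" using norm_mult[of "eis_sub x y" g] by (simp add: eis_norm_def)
  moreover have "eis_sub x y \<noteq> (0,0)" using a(3) by (auto simp: eis_sub_def prod_eq_iff)
  ultimately show False using norm_pos a(2) by (metis mult_eq_0_iff not_one_le_zero)
qed

locale EC3 = EC2 +
  fixes l :: int
  assumes lpos: "l > 0"
begin

abbreviation "AL \<equiv> (l*p, l*q)"

definition pmap :: "eis set \<Rightarrow> int" where
  "pmap X = phi r (SOME x. x \<in> X) mod n"

lemma AL_eq: "AL = eis_mult (l,0) (p,q)" by (simp add: eis_mult_def)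

lemma AL_sub: "inI AL v \<Longrightarrow> inI (p,q) v"
proof -
  assume "inI AL v"
  then obtain s where "v = eis_mult s AL" unfolding inI_def by blast
  then have "v = eis_mult (eis_mult s (l,0)) (p,q)" by (simp add: AL_eq eis_mult_assoc)
  then show ?thesis unfolding inI_def by blast
qed

lemma phi_cong: "inI (p,q) (eis_sub a b) \<Longrightarrow> phi r a mod n = phi r b mod n"
  by (simp add: L_ker phi_sub mod_eq_dvd_iff)

lemma pmap_cls: "pmap (cls AL a) = phi r a mod n"
proof -
  have "a \<in> cls AL a" using inI_zero[of AL] by (simp add: R_iff eis_sub_def)
  then have "(SOME x. x \<in> cls AL a) \<in> cls AL a" by (rule someI)
  then have "inI AL (eis_sub a (SOME x. x \<in> cls AL a))" by (simp add: R_iff)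
  then have "phi r a mod n = phi r (SOME x. x \<in> cls AL a) mod n" by (intro phi_cong AL_sub)
  then show ?thesis by (simp add: pmap_def)
qed

lemma cover_img: "pmap ` verts (EJ AL) = {0..<n}"
proof
  show "pmap ` verts (EJ AL) \<subseteq> {0..<n}" using npos by (auto simp: verts_EJ pmap_cls)
  show "{0..<n} \<subseteq> pmap ` verts (EJ AL)"
  proof
    fix w assume w: "w \<in> {0..<n}"
    have "pmap (cls AL (w,0)) = w" using w by (simp add: pmap_cls phi_def)
    then show "w \<in> pmap ` verts (EJ AL)" unfolding verts_EJ by (metis rangeI image_eqI)
  qed
qed

lemma cover_nbhd: "v \<in> verts (EJ AL) \<Longrightarrow> bij_betw pmap (nbhd (EJ AL) v) (nbhd (TL n 1 r (r-1)) (pmap v))"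
proof -
  assume "v \<in> verts (EJ AL)"
  then obtain a where v: "v = cls AL a" by (auto simp: verts_EJ)
  let ?f = "\<lambda>c. cls AL (eis_add a c)"
  have pf: "pmap (?f c) = (phi r a + phi r c) mod n" for c by (simp add: pmap_cls phi_add)
  have inj: "inj_on pmap (?f ` EJ_conn)"
  proof (rule inj_onI)
    fix X1 X2 assume X: "X1 \<in> ?f ` EJ_conn" "X2 \<in> ?f ` EJ_conn" "pmap X1 = pmap X2"
    then obtain c1 c2 where c: "c1 \<in> EJ_conn" "c2 \<in> EJ_conn" "X1 = ?f c1" "X2 = ?f c2" by blast
    then have "(phi r a + phi r c1) mod n = (phi r a + phi r c2) mod n" using X(3) pf by simp
    then have "phi r c1 mod n = phi r c2 mod n" by (simp add: mod_eq_dvd_iff)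
    then have "c1 = c2" using phi_cong_inj c by blast
    then show "X1 = X2" using c by simp
  qed
  have img: "pmap ` ?f ` EJ_conn = nbhd (TL n 1 r (r-1)) (phi r a mod n)"
  proof
    show "pmap ` ?f ` EJ_conn \<subseteq> nbhd (TL n 1 r (r-1)) (phi r a mod n)"
    proof
      fix y assume "y \<in> pmap ` ?f ` EJ_conn"
      then obtain c where c: "c \<in> EJ_conn" "y = (phi r a + phi r c) mod n" using pf by auto
      have "n dvd (y - phi r a mod n) - phi r c"
      proof -
        have "[y = phi r a + phi r c] (mod n)" using c by (simp add: cong_def)
        moreover have "[phi r a mod n = phi r a] (mod n)" by (simp add: cong_def)
        ultimately have "[(y - phi r a mod n) - phi r c = (phi r a + phi r c) - phi r a - phi r c] (mod n)"
          by (intro cong_diff) simp_all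
        then show ?thesis by (simp add: cong_0_iff)
      qed
      then have "(y - phi r a mod n) mod n \<in> TL_conn n 1 r (r-1)" using c(1) in_TLc by blast
      moreover have "y \<in> {0..<n}" using c npos by simp
      ultimately show "y \<in> nbhd (TL n 1 r (r-1)) (phi r a mod n)"
        by (simp add: nbhd_def verts_TL adj_TL)
    qed
    show "nbhd (TL n 1 r (r-1)) (phi r a mod n) \<subseteq> pmap ` ?f ` EJ_conn"
    proof
      fix y assume "y \<in> nbhd (TL n 1 r (r-1)) (phi r a mod n)"
      then have y: "y \<in> {0..<n}" "(y - phi r a mod n) mod n \<in> TL_conn n 1 r (r-1)"
        by (simp_all add: nbhd_def verts_TL adj_TL)
      then obtain c where c: "c \<in> EJ_conn" "n dvd (y - phi r a mod n) - phi r c" using in_TLc by blast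
      then have "y mod n = (phi r a mod n + phi r c) mod n" by (simp add: mod_eq_dvd_iff algebra_simps)
      then have "y = (phi r a + phi r c) mod n" using y(1) by (simp add: mod_add_left_eq)
      then have "y = pmap (?f c)" using pf by simp
      then show "y \<in> pmap ` ?f ` EJ_conn" using c(1) by blast
    qed
  qed
  show ?thesis unfolding v nbhd_EJ bij_betw_def using inj img by (simp add: pmap_cls)
qed

lemma pq_ne0: "(p,q) \<noteq> (0,0)" using n7 n_def by (auto simp: eis_norm_def)

lemma cover_fibre: "w \<in> {0..<n} \<Longrightarrow> card {v \<in> verts (EJ AL). pmap v = w} = nat (l^2)"
proof -
  assume w: "w \<in> {0..<n}"
  define F where "F = (\<lambda>ij::int\<times>int. cls AL (eis_add (w,0) (eis_mult ij (p,q))))"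
  have inj: "inj_on F ({0..<l}\<times>{0..<l})"
  proof (rule inj_onI)
    fix x y assume xy: "x \<in> {0..<l}\<times>{0..<l}" "y \<in> {0..<l}\<times>{0..<l}" "F x = F y"
    then have "inI AL (eis_sub (eis_add (w,0) (eis_mult x (p,q))) (eis_add (w,0) (eis_mult y (p,q))))"
      by (simp add: F_def cls_eq)
    moreover have "eis_sub (eis_add (w,0) (eis_mult x (p,q))) (eis_add (w,0) (eis_mult y (p,q)))
       = eis_mult (eis_sub x y) (p,q)" by (simp add: eis_sub_def eis_add_def eis_mult_def algebra_simps)
    ultimately obtain s where "eis_mult (eis_sub x y) (p,q) = eis_mult s AL" unfolding inI_def by auto
    then have "eis_mult (eis_sub x y) (p,q) = eis_mult (eis_mult s (l,0)) (p,q)" by (simp add: AL_eq eis_mult_assoc)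
    then have "eis_sub x y = eis_mult s (l,0)" using mult_cancel pq_ne0 by blast
    then have "l dvd fst x - fst y" "l dvd snd x - snd y" by (auto simp: eis_sub_def eis_mult_def prod_eq_iff)
    then have "fst x mod l = fst y mod l" "snd x mod l = snd y mod l" by (simp_all add: mod_eq_dvd_iff)
    then show "x = y" using xy(1,2) by (auto simp: prod_eq_iff mem_Times_iff)
  qed
  have img: "F ` ({0..<l}\<times>{0..<l}) = {v \<in> verts (EJ AL). pmap v = w}"
  proof
    show "F ` ({0..<l}\<times>{0..<l}) \<subseteq> {v \<in> verts (EJ AL). pmap v = w}"
    proof
      fix X assume "X \<in> F ` ({0..<l}\<times>{0..<l})"
      then obtain ij where X: "X = F ij" by blast
      have "inI (p,q) (eis_mult ij (p,q))" by (rule inI_mult[OF inI_self])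
      then have "n dvd phi r (eis_mult ij (p,q))" by (simp add: L_ker)
      then have "phi r (eis_mult ij (p,q)) mod n = 0" by simp
      then have "(w + phi r (eis_mult ij (p,q))) mod n = w" using w by (metis add_0_right mod_add_right_eq atLeastLessThan_iff mod_pos_pos_trivial)
      then have "pmap X = w" by (simp add: X F_def pmap_cls phi_add phi_def[of r "(w,0)"])
      moreover have "X \<in> verts (EJ AL)" by (simp add: X F_def verts_EJ)
      ultimately show "X \<in> {v \<in> verts (EJ AL). pmap v = w}" by simp
    qed
    show "{v \<in> verts (EJ AL). pmap v = w} \<subseteq> F ` ({0..<l}\<times>{0..<l})"
    proof
      fix X assume "X \<in> {v \<in> verts (EJ AL). pmap v = w}"
      then obtain a where X: "X = cls AL a" "phi r a mod n = w" by (auto simp: verts_EJ pmap_cls)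
      then have "phi r a mod n = phi r (w,0) mod n" using w by (simp add: phi_def)
      then have "n dvd phi r (eis_sub a (w,0))" by (simp add: phi_sub mod_eq_dvd_iff)
      then have "inI (p,q) (eis_sub a (w,0))" by (simp add: L_ker)
      then obtain t1 t2 where t: "eis_sub a (w,0) = eis_mult (t1,t2) (p,q)" unfolding inI_def by auto
      define i where "i = t1 mod l"
      define j where "j = t2 mod l"
      define k1 where "k1 = t1 div l"
      define k2 where "k2 = t2 div l"
      have t1: "t1 = l*k1 + i" and t2: "t2 = l*k2 + j" by (simp_all add: i_def j_def k1_def k2_def)
      obtain a1 a2 where a: "a = (a1,a2)" by fastforce
      have "eis_sub a (eis_add (w,0) (eis_mult (i,j) (p,q))) = eis_mult (k1,k2) AL"
      proof -
        have e: "a1 - w = (l*k1+i)*p - (l*k2+j)*q" "a2 = (l*k1+i)*q + p*(l*k2+j) + (l*k2+j)*q"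
          using t unfolding a t1 t2 by (simp_all add: eis_sub_def eis_mult_def)
        have e1: "a1 = w + (l*k1+i)*p - (l*k2+j)*q" using e(1) by linarith
        show ?thesis unfolding a by (simp add: e1 e(2) eis_sub_def eis_add_def eis_mult_def algebra_simps)
      qed
      then have "inI AL (eis_sub a (eis_add (w,0) (eis_mult (i,j) (p,q))))" unfolding inI_def by blast
      then have "X = F (i,j)" by (simp add: X F_def cls_eq)
      moreover have "(i,j) \<in> {0..<l}\<times>{0..<l}" using lpos by (simp add: i_def j_def)
      ultimately show "X \<in> F ` ({0..<l}\<times>{0..<l})" by blast
    qed
  qed
  have "card {v \<in> verts (EJ AL). pmap v = w} = card ({0..<l}\<times>{0..<l})"
    using inj img card_image by fastforce
  also have "\<dots> = nat l * nat l" by (simp add: card_cartesian_product)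
  also have "\<dots> = nat (l^2)" using lpos by (simp add: power2_eq_square nat_mult_distrib)
  finally show ?thesis .
qed

lemma cover: "is_k_fold_cover (nat (l^2)) (EJ AL) (TL n 1 r (r-1))"
  unfolding is_k_fold_cover_def
  by (rule exI[of _ pmap]) (simp add: cover_img cover_nbhd cover_fibre verts_TL)

end


lemma rho_pows: "eis_pow eis_rho 0 = (1,0)" "eis_pow eis_rho 1 = (0,1)" "eis_pow eis_rho 2 = (-1,1)"
  "eis_pow eis_rho 3 = (-1,0)" "eis_pow eis_rho 4 = (0,-1)" "eis_pow eis_rho 5 = (1,-1)"
  by (simp_all add: eis_rho_def eis_mult_def eval_nat_numeral)

lemma conn_pow: "x \<in> EJ_conn \<Longrightarrow> \<exists>j. x = eis_pow eis_rho j"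
proof -
  assume "x \<in> EJ_conn"
  then have "x = (1,0) \<or> x = (-1,0) \<or> x = (0,1) \<or> x = (0,-1) \<or> x = (-1,1) \<or> x = (1,-1)"
    by (simp add: EJ_conn_def)
  then show ?thesis by (elim disjE) (metis rho_pows)+
qed

lemma norm1: "eis_norm (p,q) = 1 \<Longrightarrow> (p,q) \<in> EJ_conn"
proof -
  assume h: "eis_norm (p,q) = 1"
  have e: "(2*p+q)^2 + 3*q^2 = 4" using h by (simp add: eis_norm_def power2_eq_square algebra_simps)
  have "q^2 < 2" using e zero_le_power2[of "2*p+q"] by linarith
  then have "q^2 \<le> 1^2" by simp
  then have q: "\<bar>q\<bar> \<le> 1" using power2_le_iff_abs_le[of 1 q] by simp
  have "(2*p+q)^2 \<le> 4" using e zero_le_power2[of q] by linarith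
  then have "(2*p+q)^2 \<le> 2^2" by simp
  then have pq: "\<bar>2*p+q\<bar> \<le> 2" using power2_le_iff_abs_le[of 2 "2*p+q"] by simp
  have "q = -1 \<or> q = 0 \<or> q = 1" using q by linarith
  moreover have "p = -1 \<or> p = 0 \<or> p = 1" using q pq by linarith
  ultimately show ?thesis using h by (elim disjE) (simp_all add: EJ_conn_def eis_norm_def)
qed

lemma sq_mod3: "(x::int)^2 mod 3 \<noteq> 2"
proof -
  have "x^2 mod 3 = (x mod 3)^2 mod 3" by (simp add: power_mod)
  moreover have "x mod 3 = 0 \<or> x mod 3 = 1 \<or> x mod 3 = 2" by linarith
  ultimately show ?thesis by (elim disjE) simp_all
qed

theorem corollary4p2:
  fixes c d :: int
  assumes "eis_norm (c, d) \<ge> 7"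
    and "eis_norm (c, d) mod 6 = 1"
    and "\<not> (\<exists>m::int. eis_associate (c, d) (m, 0))"
  shows "let l = gcd c d; c' = c div l; d' = d div l in
         \<exists>n a b e. first_kind_frobenius_circulant n a b e \<and>
           is_k_fold_cover (nat (l ^ 2)) (EJ (c, d)) (TL n a b e) \<and>
           graph_iso (TL n a b e) (EJ (c', d'))"
proof -
  define l where "l = gcd c d"
  define p where "p = c div l"
  define q where "q = d div l"
  have cd0: "c \<noteq> 0 \<or> d \<noteq> 0" using assms(1) by (auto simp: eis_norm_def)
  have lpos: "l > 0" using cd0 by (simp add: l_def)
  have cp: "c = l*p" by (simp add: p_def l_def)
  have dq: "d = l*q" by (simp add: q_def l_def)
  have cop: "coprime p q" using div_gcd_coprime[OF cd0] by (simp add: p_def q_def l_def)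
  define n where "n = eis_norm (p,q)"
  have Nn: "eis_norm (c,d) = l^2 * n" by (simp add: n_def cp dq eis_norm_def power2_eq_square algebra_simps)
  have pq0: "(p,q) \<noteq> (0,0)" using cd0 cp dq by auto
  have npos: "n \<ge> 1" using norm_pos[OF pq0] by (simp add: n_def)
  have N2: "eis_norm (c,d) mod 2 = 1" using assms(2) by presburger
  have N3: "eis_norm (c,d) mod 3 = 1" using assms(2) by presburger
  have n2: "n mod 2 = 1"
  proof (rule ccontr)
    assume "n mod 2 \<noteq> 1"
    then have "2 dvd n" by presburger
    then have "2 dvd eis_norm (c,d)" using Nn by simp
    then show False using N2 by presburger
  qed
  have n3: "n mod 3 \<noteq> 0"
  proof
    assume "n mod 3 = 0"
    then have "3 dvd n" by presburger
    then have "3 dvd eis_norm (c,d)" using Nn by simp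
    then show False using N3 by presburger
  qed
  have "n = (p - q)^2 + 3*(p*q)" by (simp add: n_def eis_norm_def power2_eq_square algebra_simps)
  then have "n mod 3 = (p-q)^2 mod 3" by simp
  then have n3': "n mod 3 = 1" using n3 sq_mod3[of "p-q"] by presburger
  have n6: "n mod 6 = 1" using n2 n3' by presburger
  have n_ne1: "n \<noteq> 1"
  proof
    assume "n = 1"
    then have "(p,q) \<in> EJ_conn" using norm1 n_def by simp
    then obtain j where j: "(p,q) = eis_pow eis_rho j" using conn_pow by blast
    have "(c,d) = eis_mult (l,0) (p,q)" by (simp add: cp dq eis_mult_def)
    then have "eis_associate (c,d) (l,0)" unfolding eis_associate_def using j by metis
    then show False using assms(3) by blast
  qed
  have n7: "n \<ge> 7" using npos n_ne1 n6 by presburger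
  have "[p^2 = n] (mod q)" by (simp add: n_def eis_norm_def cong_iff_dvd_diff power2_eq_square algebra_simps)
  moreover have "coprime (p^2) q" using cop by simp
  ultimately have "coprime n q" using cong_imp_coprime by blast
  then obtain u where u: "[q * u = 1] (mod n)" using cong_solve_coprime_int coprime_commute by blast
  define r where "r = (-p*u) mod n"
  interpret EC3 p q n u r l
    using cop n7 u n6 lpos by unfold_locales (simp_all add: r_def n_def[symmetric])
  have "first_kind_frobenius_circulant n 1 r (r-1)" by (rule first_kind)
  moreover have "is_k_fold_cover (nat (l ^ 2)) (EJ (c, d)) (TL n 1 r (r-1))" using cover cp dq by simp
  moreover have "graph_iso (TL n 1 r (r-1)) (EJ (p, q))" by (rule iso)
  ultimately show ?thesis unfolding Let_def l_def[symmetric] p_def[symmetric] q_def[symmetric] by blast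
qed


end
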